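(* Let $H$ be a strong symplectic Hilbert space with signature $(n_+,n_-)$ and let $W\subseteq H$ be a maximal positive-definite subspace. If $n_+<\infty$ or $n_-<\infty$, then $W$ is maximally completely positive-definite.
   Context: All Hilbert spaces are complex and separable. A strong symplectic structure on a Hilbert space $H$ is a continuous sesquilinear form $[\cdot,\cdot]$ (linear in the first, conjugate-linear in the second variable) with $[y,x]=-\overline{[x,y]}$, non-degenerate, and such that $x\mapsto[\cdot,x]$ maps $H$ onto its dual. For $L\subseteq H$, $L^{\perp_s}=\{x:[x,y]=0\ \forall y\in L\}$. A closed subspace $L\subseteq H$ is maximal positive-definite if $-i[x,x]>0$ for every $0\ne x\in L$ and $L$ is not properly contained in a subspace with the same property; it is maximally completely positive-definite if moreover there is $c_L>0$ with $-i[x,x]\ge c_L\|x\|^2$ for all $x\in L$. If $L$ is maximally completely positive-definite then $H=L\oplus L^{\perp_s}$ (topological direct sum), and the numbers $n_+=\dim L$, $n_-=\dim L^{\perp_s}$ do not depend on the choice of $L$; $(n_+,n_-)$ is the signature of $H$ (the signature of the Hermitian form $-i[\cdot,\cdot]$). *)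

theory Defs
  imports "HOL-Analysis.Analysis"
begin

text \<open>A complex Hilbert space is encoded as a real Hilbert space (type class
  real_inner + complete_space, real inner product = real part of the complex one)
  together with an orthogonal complex structure J (multiplication by the imaginary unit).\<close>

definition complex_structure :: "('a::real_normed_vector \<Rightarrow> 'a) \<Rightarrow> bool" where
  "complex_structure J \<longleftrightarrow> linear J \<and> (\<forall>x. J (J x) = - x) \<and> (\<forall>x. norm (J x) = norm x)"

definition cscale :: "('a::real_vector \<Rightarrow> 'a) \<Rightarrow> complex \<Rightarrow> 'a \<Rightarrow> 'a" where
  "cscale J c x = Re c *\<^sub>R x + Im c *\<^sub>R J x"

definition separable_space :: "'a::metric_space itself \<Rightarrow> bool" where
  "separable_space _ \<longleftrightarrow> (\<exists>D::'a set. countable D \<and> closure D = UNIV)"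

definition cont_clinear_functional :: "('a::real_normed_vector \<Rightarrow> 'a) \<Rightarrow> ('a \<Rightarrow> complex) \<Rightarrow> bool" where
  "cont_clinear_functional J f \<longleftrightarrow>
     (\<forall>x y. f (x + y) = f x + f y) \<and> (\<forall>c x. f (cscale J c x) = c * f x) \<and>
     (\<exists>C. \<forall>x. norm (f x) \<le> C * norm x)"

definition strong_symplectic :: "('a::real_normed_vector \<Rightarrow> 'a) \<Rightarrow> ('a \<Rightarrow> 'a \<Rightarrow> complex) \<Rightarrow> bool" where
  "strong_symplectic J \<omega> \<longleftrightarrow>
     \<comment> \<open>sesquilinear: linear in the first variable\<close>
     (\<forall>x y z. \<omega> (x + y) z = \<omega> x z + \<omega> y z) \<and>
     (\<forall>c x y. \<omega> (cscale J c x) y = c * \<omega> x y) \<and>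
     \<comment> \<open>conjugate-linear in the second variable\<close>
     (\<forall>x y z. \<omega> x (y + z) = \<omega> x y + \<omega> x z) \<and>
     (\<forall>c x y. \<omega> x (cscale J c y) = cnj c * \<omega> x y) \<and>
     \<comment> \<open>continuous\<close>
     (\<exists>C. \<forall>x y. norm (\<omega> x y) \<le> C * norm x * norm y) \<and>
     \<comment> \<open>skew-Hermitian\<close>
     (\<forall>x y. \<omega> y x = - cnj (\<omega> x y)) \<and>
     \<comment> \<open>non-degenerate\<close>
     (\<forall>x. (\<forall>y. \<omega> y x = 0) \<longrightarrow> x = 0) \<and>
     (\<forall>x. (\<forall>y. \<omega> x y = 0) \<longrightarrow> x = 0) \<and>
     \<comment> \<open>x \<mapsto> \<omega>(\<cdot>, x) maps H onto its dual\<close>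
     (\<forall>f. cont_clinear_functional J f \<longrightarrow> (\<exists>x. \<forall>y. f y = \<omega> y x))"

definition symp_orth :: "('a \<Rightarrow> 'a \<Rightarrow> complex) \<Rightarrow> 'a set \<Rightarrow> 'a set" where
  "symp_orth \<omega> L = {x. \<forall>y\<in>L. \<omega> x y = 0}"

definition closed_csubspace :: "('a::real_normed_vector \<Rightarrow> 'a) \<Rightarrow> 'a set \<Rightarrow> bool" where
  "closed_csubspace J L \<longleftrightarrow> closed L \<and> subspace L \<and> (\<forall>x\<in>L. J x \<in> L)"

definition pos_def :: "('a::real_normed_vector \<Rightarrow> 'a \<Rightarrow> complex) \<Rightarrow> 'a set \<Rightarrow> bool" where
  "pos_def \<omega> L \<longleftrightarrow> (\<forall>x\<in>L. x \<noteq> 0 \<longrightarrow> Re (- \<i> * \<omega> x x) > 0)"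

definition max_pos_def :: "('a::real_normed_vector \<Rightarrow> 'a) \<Rightarrow> ('a \<Rightarrow> 'a \<Rightarrow> complex) \<Rightarrow> 'a set \<Rightarrow> bool" where
  "max_pos_def J \<omega> L \<longleftrightarrow> closed_csubspace J L \<and> pos_def \<omega> L \<and>
     \<not> (\<exists>M. closed_csubspace J M \<and> pos_def \<omega> M \<and> L \<subset> M)"

definition max_compl_pos_def :: "('a::real_normed_vector \<Rightarrow> 'a) \<Rightarrow> ('a \<Rightarrow> 'a \<Rightarrow> complex) \<Rightarrow> 'a set \<Rightarrow> bool" where
  "max_compl_pos_def J \<omega> L \<longleftrightarrow> max_pos_def J \<omega> L \<and>
     (\<exists>c>0. \<forall>x\<in>L. Re (- \<i> * \<omega> x x) \<ge> c * (norm x)\<^sup>2)"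

text \<open>Finite-dimensional subset (real and complex finite-dimensionality coincide).\<close>
definition fin_dim :: "'a::real_vector set \<Rightarrow> bool" where
  "fin_dim S \<longleftrightarrow> (\<exists>B. finite B \<and> S \<subseteq> span B)"

end

theory Submission
  imports Defs
begin


lemma fd_seq:
  fixes B :: "'a::real_normed_vector set"
  assumes "finite B"
  shows "\<And>f::nat \<Rightarrow> 'a. (\<And>n. f n \<in> span B) \<Longrightarrow> bounded (range f) \<Longrightarrow>
     \<exists>l\<in>span B. \<exists>r. strict_mono r \<and> (f \<circ> r) \<longlonglongrightarrow> l"
  using assms
proof (induction B rule: finite_induct)
  case empty
  then have "\<And>n. f n = 0" by simp
  then have "(f \<circ> id) \<longlonglongrightarrow> 0" by (simp add: o_def)
  moreover have "strict_mono (id::nat\<Rightarrow>nat)" by (simp add: strict_mono_def)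
  ultimately show ?case using span_zero[of "{}"] by blast
next
  case (insert b S)
  have clS: "closed (span S)"
  proof (subst closed_sequential_limits, intro allI impI)
    fix x l assume h: "(\<forall>n. x n \<in> span S) \<and> x \<longlonglongrightarrow> l"
    then have "bounded (range x)"
      using convergent_imp_bounded by blast
    then obtain l' r where "l' \<in> span S" "strict_mono r" "(x \<circ> r) \<longlonglongrightarrow> l'"
      using insert.IH h by blast
    moreover have "(x \<circ> r) \<longlonglongrightarrow> l" using h LIMSEQ_subseq_LIMSEQ \<open>strict_mono r\<close> by blast
    ultimately show "l \<in> span S" using LIMSEQ_unique by metis
  qed
  show ?case
  proof (cases "b \<in> span S")
    case True
    then show ?thesis using insert.IH insert.prems by (simp add: span_redundant)
  next
    case False
    define d where "d = infdist b (span S)"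
    have "span S \<noteq> {}" using span_zero by blast
    then have dpos: "d > 0" using False clS in_closed_iff_infdist_zero infdist_nonneg
      unfolding d_def by (metis order_le_less)
    have "\<forall>n. \<exists>t. f n - t *\<^sub>R b \<in> span S"
      using insert.prems(1) by (simp add: span_insert)
    then obtain t where t: "\<And>n. f n - t n *\<^sub>R b \<in> span S" by metis
    obtain M where M: "\<And>n. norm (f n) \<le> M"
      using insert.prems(2) by (auto simp: bounded_iff)
    have tb: "\<bar>t n\<bar> * d \<le> norm (f n)" for n
    proof (cases "t n = 0")
      case True then show ?thesis by simp
    next
      case False
      let ?s = "f n - t n *\<^sub>R b"
      have "- (inverse (t n)) *\<^sub>R ?s \<in> span S" using t span_scale by blast
      then have "d \<le> dist b (- (inverse (t n)) *\<^sub>R ?s)" unfolding d_def by (rule infdist_le)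
      also have "b - (- (inverse (t n)) *\<^sub>R ?s) = inverse (t n) *\<^sub>R f n"
        using False by (simp add: algebra_simps)
      then have "dist b (- (inverse (t n)) *\<^sub>R ?s) = norm (f n) / \<bar>t n\<bar>"
        by (simp add: dist_norm divide_inverse abs_inverse mult.commute)
      finally show ?thesis using False by (simp add: field_simps)
    qed
    have "bounded (range t)"
      unfolding bounded_iff
    proof (intro exI[of _ "M / d"] ballI)
      fix x assume "x \<in> range t"
      then obtain n where "x = t n" by auto
      then show "norm x \<le> M / d" using tb[of n] M[of n] dpos by (simp add: field_simps)
    qed
    then obtain \<tau> r where r: "strict_mono r" "(t \<circ> r) \<longlonglongrightarrow> \<tau>"
      using bounded_imp_convergent_subsequence by blast
    define g where "g n = f (r n) - t (r n) *\<^sub>R b" for n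
    have gS: "g n \<in> span S" for n using t g_def by simp
    have "bounded (range g)"
      unfolding bounded_iff
    proof (intro exI[of _ "M + M / d * norm b"] ballI)
      fix x assume "x \<in> range g"
      then obtain n where xn: "x = g n" by auto
      have "norm x \<le> norm (f (r n)) + \<bar>t (r n)\<bar> * norm b"
        unfolding xn g_def by (metis norm_scaleR norm_triangle_ineq4)
      also have "\<dots> \<le> M + M / d * norm b"
        using tb[of "r n"] M[of "r n"] dpos
        by (intro add_mono mult_right_mono) (auto simp: field_simps)
      finally show "norm x \<le> M + M / d * norm b" .
    qed
    then obtain l0 r2 where l0: "l0 \<in> span S" "strict_mono r2" "(g \<circ> r2) \<longlonglongrightarrow> l0"
      using insert.IH gS by blast
    have "((t \<circ> r) \<circ> r2) \<longlonglongrightarrow> \<tau>" using r l0 LIMSEQ_subseq_LIMSEQ by blast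
    then have "(\<lambda>n. g (r2 n) + t (r (r2 n)) *\<^sub>R b) \<longlonglongrightarrow> l0 + \<tau> *\<^sub>R b"
      using l0(3) by (intro tendsto_intros) (auto simp: o_def)
    moreover have "(\<lambda>n. g (r2 n) + t (r (r2 n)) *\<^sub>R b) = f \<circ> (r \<circ> r2)"
      by (auto simp: g_def o_def)
    moreover have "l0 + \<tau> *\<^sub>R b \<in> span (insert b S)"
      using l0(1) by (simp add: span_insert) (rule exI[of _ \<tau>], simp)
    moreover have "strict_mono (r \<circ> r2)" using r l0 strict_mono_o by blast
    ultimately show ?thesis by metis
  qed
qed

lemma fd_closed:
  fixes B :: "'a::real_normed_vector set"
  assumes "finite B"
  shows "closed (span B)"
proof (subst closed_sequential_limits, intro allI impI)
  fix x l assume h: "(\<forall>n. x n \<in> span B) \<and> x \<longlonglongrightarrow> l"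
  then have "bounded (range x)"
    using convergent_imp_bounded by blast
  then obtain l' r where "l' \<in> span B" "strict_mono r" "(x \<circ> r) \<longlonglongrightarrow> l'"
    using fd_seq[OF assms] h by blast
  moreover have "(x \<circ> r) \<longlonglongrightarrow> l" using h LIMSEQ_subseq_LIMSEQ \<open>strict_mono r\<close> by blast
  ultimately show "l \<in> span B" using LIMSEQ_unique by metis
qed

lemma fd_functionals:
  fixes F :: "('a::real_vector \<Rightarrow> real) set"
  assumes "finite F"
  shows "\<And>W. (\<forall>\<psi>\<in>F. linear \<psi>) \<Longrightarrow> subspace W \<Longrightarrow> (\<forall>x\<in>W. (\<forall>\<psi>\<in>F. \<psi> x = 0) \<longrightarrow> x = 0)
     \<Longrightarrow> \<exists>B. finite B \<and> W \<subseteq> span B"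
  using assms
proof (induction F rule: finite_induct)
  case empty
  then have "W \<subseteq> span {}" by auto
  then show ?case by blast
next
  case (insert \<psi> F)
  define W' where "W' = W \<inter> {x. \<psi> x = 0}"
  have "subspace W'" unfolding W'_def
    using insert.prems real_vector.linear_subspace_kernel subspace_inter by auto
  moreover have "\<forall>x\<in>W'. (\<forall>\<phi>\<in>F. \<phi> x = 0) \<longrightarrow> x = 0"
    using insert.prems unfolding W'_def by auto
  moreover have "\<forall>\<phi>\<in>F. linear \<phi>" using insert.prems(1) by simp
  ultimately have "\<exists>B. finite B \<and> W' \<subseteq> span B"
    using insert.IH by simp
  then obtain B where B: "finite B" "W' \<subseteq> span B" by blast
  show ?case
  proof (cases "\<forall>x\<in>W. \<psi> x = 0")
    case True
    then have "W \<subseteq> W'" unfolding W'_def by auto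
    then show ?thesis using B by blast
  next
    case False
    then obtain w where w: "w \<in> W" "\<psi> w \<noteq> 0" by auto
    have lin: "linear \<psi>" using insert.prems by auto
    have "W \<subseteq> span (insert w B)"
    proof
      fix x assume x: "x \<in> W"
      let ?k = "\<psi> x / \<psi> w"
      have "x - ?k *\<^sub>R w \<in> W"
        using x w insert.prems(2) by (simp add: subspace_diff subspace_scale)
      moreover have "\<psi> (x - ?k *\<^sub>R w) = 0"
        using w lin by (simp add: linear_diff linear_scale)
      ultimately have "x - ?k *\<^sub>R w \<in> span B" using B unfolding W'_def by auto
      then show "x \<in> span (insert w B)" by (auto simp: span_insert)
    qed
    then show ?thesis using B by blast
  qed
qed



lemma cauchy_by_bound:
  fixes X :: "nat \<Rightarrow> 'a::real_normed_vector"
  assumes b: "\<And>n k. (norm (X n - X k))^2 \<le> \<alpha> n + \<alpha> k" and a: "\<alpha> \<longlonglongrightarrow> 0"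
  shows "Cauchy X"
proof (rule metric_CauchyI)
  fix e :: real assume e: "e > 0"
  then have "e^2/2 > 0" by simp
  from order_tendstoD(2)[OF a this] obtain N where N: "\<And>n. n \<ge> N \<Longrightarrow> \<alpha> n < e^2/2"
    by (auto simp: eventually_sequentially)
  show "\<exists>M. \<forall>m\<ge>M. \<forall>n\<ge>M. dist (X m) (X n) < e"
  proof (intro exI allI impI)
    fix m n assume "m \<ge> N" "n \<ge> N"
    then have "(norm (X m - X n))^2 < e^2" using b[of m n] N[of m] N[of n] by linarith
    then show "dist (X m) (X n) < e" using e by (simp add: dist_norm power_less_imp_less_base)
  qed
qed

lemma quad_zero:
  fixes a b :: real
  assumes "\<And>t. 0 \<le> 2*t*a + t^2*b"
  shows "a = 0"
proof (rule ccontr)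
  assume a: "a \<noteq> 0"
  define s where "s = 1 / (\<bar>b\<bar> + 1)"
  have s: "s > 0" "s * b < 1" unfolding s_def by (auto simp: field_simps)
  have "0 \<le> a^2 * s * (s*b - 2)"
    using assms[of "- (a * s)"] by (simp add: power2_eq_square algebra_simps)
  also have "\<dots> < 0" using a s by (intro mult_pos_neg) auto
  finally show False by simp
qed

lemma low_bound:
  fixes c t K a :: real
  assumes "c > 0"
  shows "c*t^2 - 2*K*t*a \<ge> - (K^2*a^2/c)"
proof -
  have "0 \<le> (c*t - K*a)^2" by simp
  then have "0 \<le> c*(c*t^2 - 2*K*t*a) + K^2*a^2" by (simp add: power2_eq_square algebra_simps)
  then have "- (c*t^2 - 2*K*t*a) * c \<le> K^2*a^2" by (simp add: algebra_simps)
  then have "- (c*t^2 - 2*K*t*a) \<le> K^2*a^2 / c" using assms by (simp add: le_divide_eq)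
  then show ?thesis by linarith
qed

locale symp =
  fixes J :: "'a::{real_inner, complete_space} \<Rightarrow> 'a" and \<omega> :: "'a \<Rightarrow> 'a \<Rightarrow> complex"
  assumes cs: "complex_structure J" and ss: "strong_symplectic J \<omega>"
begin

definition Q where "Q x = Im (\<omega> x x)"

lemma ssd: "(\<forall>x y z. \<omega> (x + y) z = \<omega> x z + \<omega> y z) \<and>
     (\<forall>c x y. \<omega> (cscale J c x) y = c * \<omega> x y) \<and>
     (\<forall>x y z. \<omega> x (y + z) = \<omega> x y + \<omega> x z) \<and>
     (\<forall>c x y. \<omega> x (cscale J c y) = cnj c * \<omega> x y) \<and>
     (\<exists>C. \<forall>x y. norm (\<omega> x y) \<le> C * norm x * norm y) \<and>
     (\<forall>x y. \<omega> y x = - cnj (\<omega> x y))"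
  using ss unfolding strong_symplectic_def by (elim conjE) (intro conjI)

lemma add_left: "\<omega> (x + y) z = \<omega> x z + \<omega> y z" using ssd by (elim conjE) (erule allE)+
lemma cscale_left: "\<omega> (cscale J c x) y = c * \<omega> x y" using ssd by (elim conjE) (erule allE)+
lemma add_right: "\<omega> x (y + z) = \<omega> x y + \<omega> x z" using ssd by (elim conjE) (erule allE)+
lemma cscale_right: "\<omega> x (cscale J c y) = cnj c * \<omega> x y" using ssd by (elim conjE) (erule allE)+
lemma skew: "\<omega> y x = - cnj (\<omega> x y)" using ssd by (elim conjE) (erule allE)+
lemma bnd: "\<exists>C. \<forall>x y. norm (\<omega> x y) \<le> C * norm x * norm y" using ssd by (elim conjE)

lemma cscale_real: "cscale J (complex_of_real r) x = r *\<^sub>R x" by (simp add: cscale_def)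
lemma cscale_i: "cscale J \<i> x = J x" by (simp add: cscale_def)

lemma scale_left: "\<omega> (r *\<^sub>R x) y = r *\<^sub>R \<omega> x y"
  using cscale_left[of "complex_of_real r" x y] by (simp add: cscale_real scaleR_conv_of_real)
lemma scale_right: "\<omega> x (r *\<^sub>R y) = r *\<^sub>R \<omega> x y"
  using cscale_right[of x "complex_of_real r" y] by (simp add: cscale_real scaleR_conv_of_real)

lemma bb: "bounded_bilinear \<omega>"
proof -
  obtain C where C: "\<And>x y. norm (\<omega> x y) \<le> C * norm x * norm y" using bnd by blast
  have "\<forall>a b. norm (\<omega> a b) \<le> norm a * norm b * C"
  proof (intro allI)
    fix a b show "norm (\<omega> a b) \<le> norm a * norm b * C" using C[of a b] by (simp add: algebra_simps)
  qed
  then show ?thesis unfolding bounded_bilinear_def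
    using add_left add_right scale_left scale_right by blast
qed

sublocale bb: bounded_bilinear \<omega> by (rule bb)

lemma J_linear: "linear J" using cs unfolding complex_structure_def by (elim conjE)
lemma JJ: "J (J x) = - x" using cs unfolding complex_structure_def by (elim conjE) (erule allE)

lemma J_right: "\<omega> x (J y) = - \<i> * \<omega> x y"
  using cscale_right[of x \<i> y] by (simp add: cscale_i)

lemma Re_diag: "Re (\<omega> x x) = 0"
proof -
  have "Re (\<omega> x x) = Re (- cnj (\<omega> x x))" using skew[of x x] by (rule arg_cong)
  then show ?thesis by simp
qed

lemma Q_eq: "Re (- \<i> * \<omega> x x) = Q x" by (simp add: Q_def)

lemma Q_add: "Q (u + w) = Q u + Q w + 2 * Im (\<omega> u w)"
  unfolding Q_def by (simp add: add_left add_right skew[of w u])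

lemma Q_scale: "Q (r *\<^sub>R x) = r^2 * Q x"
  unfolding Q_def by (simp add: scale_left scale_right power2_eq_square)

lemma Q_minus: "Q (- x) = Q x"
  using Q_scale[of "-1" x] by simp

lemma Q_diff: "Q (u - w) = Q u + Q w - 2 * Im (\<omega> u w)"
  using Q_add[of u "-w"] by (simp add: Q_minus bb.minus_right)

lemma Q_cscale: "Q (cscale J c x) = (cmod c)^2 * Q x"
proof -
  have "\<omega> (cscale J c x) (cscale J c x) = (c * cnj c) * \<omega> x x"
    by (simp add: cscale_left cscale_right)
  also have "c * cnj c = complex_of_real ((cmod c)^2)" by (simp add: complex_mult_cnj cmod_def)
  finally show ?thesis unfolding Q_def by simp
qed

lemma para: "Q (u + v) + Q (u - v) = 2 * Q u + 2 * Q v"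
  by (simp add: Q_add Q_diff)

lemma Q_bound: "\<bar>Q x\<bar> \<le> K * (norm x)^2" if "\<And>a b. norm (\<omega> a b) \<le> norm a * norm b * K"
proof -
  have "\<bar>Q x\<bar> \<le> norm (\<omega> x x)" unfolding Q_def by (rule abs_Im_le_cmod)
  also have "\<dots> \<le> K * (norm x)^2" using that[of x x] by (simp add: power2_eq_square mult.commute)
  finally show ?thesis .
qed

lemma Q_tendsto: "f \<longlonglongrightarrow> l \<Longrightarrow> (\<lambda>n. Q (f n)) \<longlonglongrightarrow> Q l"
  unfolding Q_def by (rule tendsto_Im, rule bb.tendsto)

lemma orth_swap: "\<omega> x y = 0 \<Longrightarrow> \<omega> y x = 0"
  using skew[of y x] by simp

end


context symp begin

lemma Kex: "\<exists>K>0. \<forall>a b. norm (\<omega> a b) \<le> norm a * norm b * K"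
  using bb.pos_bounded by blast

lemma decomp:
  assumes L: "closed L" "subspace L" "\<forall>y\<in>L. J y \<in> L"
    and c: "c > 0" "\<forall>y\<in>L. c * (norm y)^2 \<le> Q y"
  shows "\<exists>l\<in>L. \<forall>l'\<in>L. \<omega> (x - l) l' = 0"
proof -
  obtain K where K: "K > 0" "\<And>a b. norm (\<omega> a b) \<le> norm a * norm b * K"
    using Kex by blast
  define G where "G l = Q (l - x)" for l
  define lb where "lb = - (K^2 * (norm x)^2 / c + K * (norm x)^2)"
  have Glow: "lb \<le> G l" if l: "l \<in> L" for l
  proof -
    have "G l = Q l + Q x - 2 * Im (\<omega> l x)" unfolding G_def by (rule Q_diff)
    moreover have "c * (norm l)^2 \<le> Q l" using c l by blast
    moreover have "- (K * (norm x)^2) \<le> Q x" using Q_bound[of K x] K by (simp add: abs_le_iff)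
    moreover have "Im (\<omega> l x) \<le> K * norm l * norm x"
      using abs_Im_le_cmod[of "\<omega> l x"] K(2)[of l x] by (simp add: algebra_simps)
    moreover have "c*(norm l)^2 - 2*K*(norm l)*(norm x) \<ge> - (K^2*(norm x)^2/c)"
      using low_bound[OF c(1)] by blast
    ultimately show ?thesis unfolding lb_def by (simp add: algebra_simps)
  qed
  define \<mu> where "\<mu> = Inf (G ` L)"
  have ne: "G ` L \<noteq> {}" using L(2) subspace_0 by blast
  have bdd: "bdd_below (G ` L)" using Glow by (auto intro!: bdd_belowI)
  have muG: "\<mu> \<le> G l" if "l \<in> L" for l
    unfolding \<mu>_def using bdd that by (simp add: cInf_lower)
  have "\<forall>n. \<exists>l\<in>L. G l < \<mu> + inverse (real (Suc n))"
  proof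
    fix n
    have "Inf (G ` L) < \<mu> + inverse (real (Suc n))" unfolding \<mu>_def by simp
    then obtain v where "v \<in> G ` L" "v < \<mu> + inverse (real (Suc n))"
      using cInf_lessD[OF ne] by blast
    then show "\<exists>l\<in>L. G l < \<mu> + inverse (real (Suc n))" by auto
  qed
  then obtain ls where ls: "\<And>n. ls n \<in> L" "\<And>n. G (ls n) < \<mu> + inverse (real (Suc n))"
    by metis
  define \<alpha> where "\<alpha> n = 2 / c * inverse (real (Suc n))" for n
  have "(norm (ls n - ls k))^2 \<le> \<alpha> n + \<alpha> k" for n k
  proof -
    let ?u = "ls n - x" and ?v = "ls k - x"
    define mid where "mid = (1/2) *\<^sub>R (ls n + ls k)"
    have midL: "mid \<in> L" unfolding mid_def using ls(1) L(2) by (simp add: subspace_add subspace_scale)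
    have "?u + ?v = 2 *\<^sub>R (mid - x)" unfolding mid_def by (simp add: algebra_simps scaleR_2)
    then have "Q (?u + ?v) = 4 * G mid" unfolding G_def by (simp add: Q_scale)
    then have 1: "4 * \<mu> \<le> Q (?u + ?v)" using muG[OF midL] by simp
    have 2: "Q (?u + ?v) + Q (ls n - ls k) = 2 * G (ls n) + 2 * G (ls k)"
      using para[of ?u ?v] unfolding G_def by simp
    have "ls n - ls k \<in> L" using ls(1) L(2) by (simp add: subspace_diff)
    then have 3: "c * (norm (ls n - ls k))^2 \<le> Q (ls n - ls k)" using c by blast
    have "c * (norm (ls n - ls k))^2 \<le> 2 * inverse (real (Suc n)) + 2 * inverse (real (Suc k))"
      using 1 2 3 ls(2)[of n] ls(2)[of k] by linarith
    then have "(norm (ls n - ls k))^2 \<le> (2 * inverse (real (Suc n)) + 2 * inverse (real (Suc k))) / c"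
      using c(1) by (simp add: pos_le_divide_eq mult.commute)
    then show ?thesis unfolding \<alpha>_def by (simp add: divide_inverse algebra_simps)
  qed
  moreover have "\<alpha> \<longlonglongrightarrow> 0"
    unfolding \<alpha>_def using tendsto_mult[OF tendsto_const LIMSEQ_inverse_real_of_nat, of "2/c"] by simp
  ultimately have "Cauchy ls" by (rule cauchy_by_bound)
  then obtain l where lim: "ls \<longlonglongrightarrow> l" using Cauchy_convergent_iff convergent_def by blast
  have lL: "l \<in> L" using closed_sequentially[OF L(1) ls(1) lim] .
  have "(\<lambda>n. G (ls n)) \<longlonglongrightarrow> G l" unfolding G_def
    by (rule Q_tendsto, intro tendsto_intros lim)
  moreover have "(\<lambda>n. G (ls n)) \<longlonglongrightarrow> \<mu>"
  proof (rule tendsto_sandwich[of "\<lambda>n. \<mu>" _ _ "\<lambda>n. \<mu> + inverse (real (Suc n))"])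
    show "\<forall>\<^sub>F n in sequentially. \<mu> \<le> G (ls n)" using muG ls(1) by simp
    show "\<forall>\<^sub>F n in sequentially. G (ls n) \<le> \<mu> + inverse (real (Suc n))"
      using ls(2) by (simp add: less_imp_le)
    show "(\<lambda>n. \<mu>) \<longlonglongrightarrow> \<mu>" by simp
    show "(\<lambda>n. \<mu> + inverse (real (Suc n))) \<longlonglongrightarrow> \<mu>"
      using tendsto_add[OF tendsto_const LIMSEQ_inverse_real_of_nat, of \<mu>] by simp
  qed
  ultimately have Gl: "G l = \<mu>" using LIMSEQ_unique by blast
  have Im0: "Im (\<omega> (l - x) l') = 0" if "l' \<in> L" for l'
  proof (rule quad_zero)
    fix t :: real
    have "l + t *\<^sub>R l' \<in> L" using lL that L(2) by (simp add: subspace_add subspace_scale)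
    then have "G l \<le> G (l + t *\<^sub>R l')" using muG Gl by simp
    moreover have "G (l + t *\<^sub>R l') = G l + t^2 * Q l' + 2 * t * Im (\<omega> (l - x) l')"
      unfolding G_def using Q_add[of "l - x" "t *\<^sub>R l'"]
      by (simp add: Q_scale scale_right algebra_simps)
    ultimately show "0 \<le> 2 * t * Im (\<omega> (l - x) l') + t^2 * Q l'" by simp
  qed
  have "\<omega> (x - l) l' = 0" if "l' \<in> L" for l'
  proof -
    have a: "Im (\<omega> (l - x) l') = 0" using Im0 that by blast
    have "Im (\<omega> (l - x) (J l')) = 0" using Im0 L(3) that by blast
    then have b: "Re (\<omega> (l - x) l') = 0" by (simp add: J_right)
    have "\<omega> (l - x) l' = 0" using a b by (simp add: complex_eq_iff)
    moreover have "x - l = - (l - x)" by simp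
    ultimately show ?thesis by (simp only: bb.minus_left) simp
  qed
  then show ?thesis using lL by blast
qed

lemma decomp_bound:
  assumes K: "\<And>a b. norm (\<omega> a b) \<le> norm a * norm b * K" "K > 0"
    and c: "c > 0" "\<forall>y\<in>L. c * (norm y)^2 \<le> Q y"
    and l: "l \<in> L" "\<forall>l'\<in>L. \<omega> (x - l) l' = 0"
  shows "c * norm l \<le> K * norm x"
proof (cases "l = 0")
  case True
  have "0 \<le> K" using K(2) by simp
  then show ?thesis using True by simp
next
  case False
  have "\<omega> x l = \<omega> (x - l) l + \<omega> l l" by (simp add: bb.diff_left)
  then have "\<omega> x l = \<omega> l l" using l by simp
  then have "Q l = Im (\<omega> x l)" unfolding Q_def by simp
  also have "\<dots> \<le> norm x * norm l * K" using abs_Im_le_cmod[of "\<omega> x l"] K(1)[of x l] by simp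
  finally have "c * (norm l)^2 \<le> norm x * norm l * K" using c l by force
  then have "(c * norm l) * norm l \<le> (K * norm x) * norm l" by (simp add: power2_eq_square algebra_simps)
  then show ?thesis using False by simp
qed

end


context symp begin

lemma mcpd_props:
  assumes "max_compl_pos_def J \<omega> L"
  shows "closed L" "subspace L" "\<forall>y\<in>L. J y \<in> L" "\<exists>c>0. \<forall>y\<in>L. c * (norm y)^2 \<le> Q y"
    "\<not> (\<exists>M. closed_csubspace J M \<and> pos_def \<omega> M \<and> L \<subset> M)"
  using assms unfolding max_compl_pos_def_def max_pos_def_def closed_csubspace_def
  by (auto simp: Q_eq Q_def)

lemma nonpos_orth:
  assumes mc: "max_compl_pos_def J \<omega> L" and fd: "fin_dim L" and m: "m \<in> symp_orth \<omega> L"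
  shows "Q m \<le> 0"
proof (rule ccontr)
  assume "\<not> Q m \<le> 0"
  then have Qm: "Q m > 0" by simp
  note P = mcpd_props[OF mc]
  obtain c where c: "c > 0" "\<forall>y\<in>L. c * (norm y)^2 \<le> Q y" using P(4) by blast
  obtain B0 where B0: "finite B0" "L \<subseteq> span B0" using fd unfolding fin_dim_def by blast
  obtain B where B: "B \<subseteq> L" "independent B" "L \<subseteq> span B" "card B = dim L" by (rule basis_exists)
  have fB: "finite B" using independent_span_bound[OF B0(1) B(2)] B(1) B0(2) by blast
  have spB: "span B = L" using B(1) B(3) P(2) span_minimal by blast
  have mo: "\<omega> m y = 0" if "y \<in> L" for y using m that unfolding symp_orth_def by blast
  define X where "X = insert m (insert (J m) B)"
  define N where "N = span X"
  have clN: "closed N" unfolding N_def X_def using fB by (intro fd_closed) simp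
  have sN: "subspace N" unfolding N_def by simp
  have JX: "J ` X \<subseteq> N"
  proof
    fix y assume "y \<in> J ` X"
    then obtain z where z: "z \<in> X" "y = J z" by blast
    show "y \<in> N"
    proof (cases "z = m")
      case True then show ?thesis using z unfolding N_def X_def by (simp add: span_base)
    next
      case False
      show ?thesis
      proof (cases "z = J m")
        case True
        then have "y = - m" using z JJ by simp
        then show ?thesis unfolding N_def X_def by (simp add: span_base span_neg)
      next
        case False
        then have "z \<in> B" using z \<open>z \<noteq> m\<close> unfolding X_def by simp
        then have "y \<in> L" using z B(1) P(3) by blast
        then have "y \<in> span B" using spB by simp
        moreover have "span B \<subseteq> N" unfolding N_def X_def by (rule span_mono) blast
        ultimately show ?thesis by blast
      qed
    qed
  qed
  have JN: "\<forall>y\<in>N. J y \<in> N"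
  proof
    fix y assume "y \<in> N"
    then have "J y \<in> J ` span X" unfolding N_def by blast
    also have "\<dots> = span (J ` X)" using real_vector.linear_span_image[OF J_linear] by simp
    also have "\<dots> \<subseteq> N" using span_minimal[OF JX sN] .
    finally show "J y \<in> N" .
  qed
  have posN: "pos_def \<omega> N"
    unfolding pos_def_def Q_eq
  proof (intro ballI impI)
    fix x assume x: "x \<in> N" "x \<noteq> 0"
    obtain a where a: "x - a *\<^sub>R m \<in> span (insert (J m) B)"
      using x(1) unfolding N_def X_def by (auto simp: span_insert)
    obtain b where b: "x - a *\<^sub>R m - b *\<^sub>R J m \<in> span B"
      using a by (auto simp: span_insert)
    define l where "l = x - a *\<^sub>R m - b *\<^sub>R J m"
    define w where "w = cscale J (Complex a b) m"
    have lL: "l \<in> L" using b spB l_def by simp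
    have xlw: "x = l + w" unfolding l_def w_def cscale_def by simp
    have "\<omega> l m = 0" using mo[OF lL] by (rule orth_swap)
    then have "\<omega> l w = 0" unfolding w_def by (simp add: cscale_right)
    then have Qx: "Q x = Q l + (cmod (Complex a b))^2 * Q m"
      unfolding xlw by (simp add: Q_add Q_cscale w_def)
    have Ql: "c * (norm l)^2 \<le> Q l" using c lL by blast
    show "0 < Q x"
    proof (cases "Complex a b = 0")
      case True
      then have "w = 0" unfolding w_def cscale_def by simp
      then have "l \<noteq> 0" using x(2) xlw by simp
      then have "0 < c * (norm l)^2" using c by simp
      then show ?thesis using Qx Ql True by simp
    next
      case False
      then have "0 < (cmod (Complex a b))^2 * Q m" using Qm by simp
      moreover have "0 \<le> c * (norm l)^2" using c by simp
      ultimately show ?thesis using Qx Ql by linarith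
    qed
  qed
  have "L \<subseteq> N" using spB unfolding N_def X_def by (metis span_mono subset_insertI subset_trans)
  moreover have "m \<in> N" unfolding N_def X_def by (simp add: span_base)
  moreover have "m \<notin> L"
  proof
    assume "m \<in> L"
    then have "\<omega> m m = 0" using mo by blast
    then show False using Qm unfolding Q_def by simp
  qed
  ultimately have "L \<subset> N" by blast
  then show False using P(5) clN sN JN posN unfolding closed_csubspace_def by blast
qed

lemma W_fd:
  assumes mc: "max_compl_pos_def J \<omega> L" and fd: "fin_dim L" and W: "max_pos_def J \<omega> W"
  shows "\<exists>B. finite B \<and> W \<subseteq> span B"
proof -
  obtain B0 where B0: "finite B0" "L \<subseteq> span B0" using fd unfolding fin_dim_def by blast
  define F where "F = (\<lambda>b x. Re (\<omega> x b)) ` B0 \<union> (\<lambda>b x. Im (\<omega> x b)) ` B0"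
  have fF: "finite F" unfolding F_def using B0 by simp
  have lin: "\<forall>\<psi>\<in>F. linear \<psi>"
  proof
    fix \<psi> assume "\<psi> \<in> F"
    then obtain b where "\<psi> = (\<lambda>x. Re (\<omega> x b)) \<or> \<psi> = (\<lambda>x. Im (\<omega> x b))" unfolding F_def by blast
    then show "linear \<psi>"
      by (elim disjE) (simp_all add: linearI add_left scale_left)
  qed
  have sW: "subspace W" and pW: "pos_def \<omega> W"
    using W unfolding max_pos_def_def closed_csubspace_def by auto
  have z: "\<forall>x\<in>W. (\<forall>\<psi>\<in>F. \<psi> x = 0) \<longrightarrow> x = 0"
  proof (intro ballI impI)
    fix x assume x: "x \<in> W" "\<forall>\<psi>\<in>F. \<psi> x = 0"
    have "\<omega> x b = 0" if "b \<in> B0" for b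
      using x(2) that unfolding F_def by (auto simp: complex_eq_iff)
    then have "B0 \<subseteq> {y. \<omega> x y = 0}" by blast
    moreover have "subspace {y. \<omega> x y = 0}"
      by (rule real_vector.linear_subspace_kernel, rule bounded_linear.linear, rule bb.bounded_linear_right)
    ultimately have "span B0 \<subseteq> {y. \<omega> x y = 0}" by (rule span_minimal)
    then have "x \<in> symp_orth \<omega> L" using B0(2) unfolding symp_orth_def by blast
    then have "Q x \<le> 0" by (rule nonpos_orth[OF mc fd])
    then show "x = 0" using pW x(1) unfolding pos_def_def Q_eq by force
  qed
  show ?thesis by (rule fd_functionals[OF fF lin sW z])
qed

end


context symp begin

lemma main:
  assumes hL: "\<exists>L. max_compl_pos_def J \<omega> L \<and> (fin_dim L \<or> fin_dim (symp_orth \<omega> L))"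
    and W: "max_pos_def J \<omega> W"
  shows "max_compl_pos_def J \<omega> W"
proof -
  obtain L where mc: "max_compl_pos_def J \<omega> L" and fdo: "fin_dim L \<or> fin_dim (symp_orth \<omega> L)"
    using hL by blast
  have clW: "closed W" and sW: "subspace W" and pW: "pos_def \<omega> W"
    using W unfolding max_pos_def_def closed_csubspace_def by auto
  have QW: "0 < Q x" if "x \<in> W" "x \<noteq> 0" for x
    using pW that unfolding pos_def_def Q_eq by blast
  have Qnn: "0 \<le> Q x" if "x \<in> W" for x
    using QW[OF that] by (cases "x = 0") (auto simp: Q_def bb.zero_left)
  have "\<exists>c>0. \<forall>x\<in>W. c * (norm x)^2 \<le> Q x"
  proof (rule ccontr)
    assume nc: "\<not> (\<exists>c>0. \<forall>x\<in>W. c * (norm x)^2 \<le> Q x)"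
    have "\<forall>n. \<exists>y\<in>W. norm y = 1 \<and> Q y < inverse (real (Suc n))"
    proof
      fix n
      define e where "e = inverse (real (Suc n))"
      have "e > 0" unfolding e_def by simp
      then obtain x where x: "x \<in> W" "Q x < e * (norm x)^2" using nc by force
      have xn: "x \<noteq> 0" using x by (auto simp: Q_def bb.zero_left)
      define y where "y = inverse (norm x) *\<^sub>R x"
      have "y \<in> W" unfolding y_def using x(1) sW by (simp add: subspace_scale)
      moreover have "norm y = 1" unfolding y_def using xn by simp
      moreover have "Q y = (inverse (norm x))^2 * Q x" unfolding y_def by (rule Q_scale)
      moreover have "(inverse (norm x))^2 * Q x < (inverse (norm x))^2 * (e * (norm x)^2)"
        using x(2) xn by (intro mult_strict_left_mono) auto
      moreover have "(inverse (norm x))^2 * (e * (norm x)^2) = e"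
        using xn by (simp add: power2_eq_square field_simps)
      ultimately show "\<exists>y\<in>W. norm y = 1 \<and> Q y < inverse (real (Suc n))"
        unfolding e_def by metis
    qed
    then obtain ys where ys: "\<And>n. ys n \<in> W" "\<And>n. norm (ys n) = 1"
      "\<And>n. Q (ys n) < inverse (real (Suc n))" by metis
    have bys: "bounded (range ys)" unfolding bounded_iff using ys(2) by (intro exI[of _ 1]) auto
    have "\<exists>r z. strict_mono r \<and> (ys \<circ> r) \<longlonglongrightarrow> z"
    proof (cases "fin_dim L")
      case True
      obtain B where B: "finite B" "W \<subseteq> span B" using W_fd[OF mc True W] by blast
      show ?thesis using fd_seq[OF B(1), of ys] B(2) ys(1) bys by blast
    next
      case False
      then have fdM: "fin_dim (symp_orth \<omega> L)" using fdo by blast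
      obtain BM where BM: "finite BM" "symp_orth \<omega> L \<subseteq> span BM"
        using fdM unfolding fin_dim_def by blast
      note P = mcpd_props[OF mc]
      obtain c where c: "c > 0" "\<forall>y\<in>L. c * (norm y)^2 \<le> Q y" using P(4) by blast
      obtain K where K: "K > 0" "\<And>a b. norm (\<omega> a b) \<le> norm a * norm b * K"
        using Kex by blast
      have "\<forall>n. \<exists>l\<in>L. \<forall>l'\<in>L. \<omega> (ys n - l) l' = 0"
        using decomp[OF P(1) P(2) P(3) c] by blast
      then obtain ls where ls: "\<And>n. ls n \<in> L" "\<And>n. \<forall>l'\<in>L. \<omega> (ys n - ls n) l' = 0"
        by metis
      define ms where "ms n = ys n - ls n" for n
      have msM: "ms n \<in> symp_orth \<omega> L" for n
        unfolding ms_def symp_orth_def using ls(2) by blast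
      have lsb: "c * norm (ls n) \<le> K" for n
        using decomp_bound[OF K(2) K(1) c ls(1) ls(2), of n] ys(2) by simp
      have "bounded (range ms)" unfolding bounded_iff
      proof (intro exI[of _ "1 + K / c"] ballI)
        fix v assume "v \<in> range ms"
        then obtain n where vn: "v = ms n" by blast
        have "norm v \<le> norm (ys n) + norm (ls n)" unfolding vn ms_def by (rule norm_triangle_ineq4)
        also have "norm (ls n) \<le> K / c" using lsb[of n] c(1) by (simp add: field_simps)
        finally show "norm v \<le> 1 + K / c" using ys(2) by simp
      qed
      moreover have "\<And>n. ms n \<in> span BM" using msM BM(2) by blast
      ultimately obtain mlim r where r: "strict_mono r" "(ms \<circ> r) \<longlonglongrightarrow> mlim"
        using fd_seq[OF BM(1), of ms] by blast
      define en where "en n = norm (ms (r n) - mlim)" for n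
      have en0: "en \<longlonglongrightarrow> 0"
      proof -
        have "(\<lambda>n. norm (ms (r n) - mlim)) \<longlonglongrightarrow> norm (mlim - mlim)"
          using r(2) by (intro tendsto_intros) (simp add: o_def)
        then show ?thesis unfolding en_def by simp
      qed
      define \<alpha> where "\<alpha> n = (2 * inverse (real (Suc n)) + 2 * K * (en n)^2) / c" for n
      have "(norm ((ls \<circ> r) n - (ls \<circ> r) k))^2 \<le> \<alpha> n + \<alpha> k" for n k
      proof -
        let ?a = "r n" and ?b = "r k"
        define dl where "dl = ls ?a - ls ?b"
        define dm where "dm = ms ?a - ms ?b"
        have dlL: "dl \<in> L" unfolding dl_def using ls(1) P(2) by (simp add: subspace_diff)
        have "\<omega> dm dl = 0" unfolding dm_def using msM dlL unfolding symp_orth_def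
          by (simp add: bb.diff_left)
        then have "\<omega> dl dm = 0" by (rule orth_swap)
        moreover have "ys ?a - ys ?b = dl + dm" unfolding dl_def dm_def ms_def by simp
        ultimately have e1: "Q (ys ?a - ys ?b) = Q dl + Q dm" by (simp add: Q_add)
        have "ys ?a + ys ?b \<in> W" using ys(1) sW by (simp add: subspace_add)
        then have "0 \<le> Q (ys ?a + ys ?b)" by (rule Qnn)
        then have e2: "Q (ys ?a - ys ?b) \<le> 2 * Q (ys ?a) + 2 * Q (ys ?b)"
          using para[of "ys ?a" "ys ?b"] by linarith
        have "inverse (real (Suc ?a)) \<le> inverse (real (Suc n))"
          using seq_suble[OF r(1), of n] by (simp add: le_imp_inverse_le)
        then have e3: "Q (ys ?a) \<le> inverse (real (Suc n))" using ys(3)[of ?a] by linarith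
        have "inverse (real (Suc ?b)) \<le> inverse (real (Suc k))"
          using seq_suble[OF r(1), of k] by (simp add: le_imp_inverse_le)
        then have e4: "Q (ys ?b) \<le> inverse (real (Suc k))" using ys(3)[of ?b] by linarith
        have "norm dm \<le> en n + en k" unfolding dm_def en_def
          using norm_triangle_ineq4[of "ms (r n) - mlim" "ms (r k) - mlim"] by simp
        then have "(norm dm)^2 \<le> (en n + en k)^2" by (simp add: power_mono)
        also have "\<dots> \<le> 2 * (en n)^2 + 2 * (en k)^2"
          using sum_squares_ge_zero[of "en n - en k" 0] by (simp add: power2_eq_square algebra_simps)
        finally have e5: "(norm dm)^2 \<le> 2 * (en n)^2 + 2 * (en k)^2" .
        have "- Q dm \<le> K * (norm dm)^2" using Q_bound[of K dm, OF K(2)] by (simp add: abs_le_iff)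
        moreover have "c * (norm dl)^2 \<le> Q dl" using c dlL by blast
        ultimately have "c * (norm dl)^2 \<le> 2 * inverse (real (Suc n)) + 2 * inverse (real (Suc k)) + K * (2 * (en n)^2 + 2 * (en k)^2)"
          using e1 e2 e3 e4 mult_left_mono[OF e5, of K] K(1) by linarith
        then have "(norm dl)^2 \<le> (2 * inverse (real (Suc n)) + 2 * inverse (real (Suc k)) + K * (2 * (en n)^2 + 2 * (en k)^2)) / c"
          using c(1) by (simp add: pos_le_divide_eq mult.commute)
        also have "\<dots> = \<alpha> n + \<alpha> k" unfolding \<alpha>_def by (simp add: add_divide_distrib algebra_simps)
        finally show ?thesis unfolding dl_def by simp
      qed
      moreover have "\<alpha> \<longlonglongrightarrow> 0"
      proof -
        have "\<alpha> \<longlonglongrightarrow> (2 * 0 + 2 * K * 0^2) / c" unfolding \<alpha>_def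
          by (intro tendsto_intros LIMSEQ_inverse_real_of_nat en0) (use c in simp)
        then show ?thesis by simp
      qed
      ultimately have "Cauchy (ls \<circ> r)" by (rule cauchy_by_bound)
      then obtain llim where ll: "(ls \<circ> r) \<longlonglongrightarrow> llim"
        using Cauchy_convergent_iff convergent_def by blast
      have "(\<lambda>n. (ls \<circ> r) n + (ms \<circ> r) n) \<longlonglongrightarrow> llim + mlim"
        using ll r(2) by (rule tendsto_add)
      moreover have "(\<lambda>n. (ls \<circ> r) n + (ms \<circ> r) n) = ys \<circ> r" by (auto simp: ms_def)
      ultimately show ?thesis using r(1) by metis
    qed
    then obtain r z where r: "strict_mono r" "(ys \<circ> r) \<longlonglongrightarrow> z" by blast
    have zW: "z \<in> W" using closed_sequentially[OF clW _ r(2)] ys(1) by simp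
    have "(\<lambda>n. norm ((ys \<circ> r) n)) \<longlonglongrightarrow> norm z" using r(2) by (rule tendsto_norm)
    moreover have "(\<lambda>n. norm ((ys \<circ> r) n)) = (\<lambda>n. 1)" using ys(2) by (simp add: o_def)
    ultimately have "norm z = 1" using LIMSEQ_unique tendsto_const by metis
    then have z0: "z \<noteq> 0" by auto
    have "(\<lambda>n. Q ((ys \<circ> r) n)) \<longlonglongrightarrow> Q z" using r(2) by (rule Q_tendsto)
    moreover have "(\<lambda>n. Q ((ys \<circ> r) n)) \<longlonglongrightarrow> 0"
    proof (rule tendsto_sandwich[of "\<lambda>n. 0" _ _ "\<lambda>n. inverse (real (Suc n))"])
      show "\<forall>\<^sub>F n in sequentially. 0 \<le> Q ((ys \<circ> r) n)" using Qnn ys(1) by simp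
      have "Q ((ys \<circ> r) n) \<le> inverse (real (Suc n))" for n
      proof -
        have "inverse (real (Suc (r n))) \<le> inverse (real (Suc n))"
          using seq_suble[OF r(1), of n] by (simp add: le_imp_inverse_le)
        then show ?thesis using ys(3)[of "r n"] unfolding o_def by linarith
      qed
      then show "\<forall>\<^sub>F n in sequentially. Q ((ys \<circ> r) n) \<le> inverse (real (Suc n))" by simp
      show "(\<lambda>n. 0) \<longlonglongrightarrow> (0::real)" by simp
      show "(\<lambda>n. inverse (real (Suc n))) \<longlonglongrightarrow> 0" by (rule LIMSEQ_inverse_real_of_nat)
    qed
    ultimately have "Q z = 0" using LIMSEQ_unique by blast
    then show False using QW[OF zW z0] by simp
  qed
  then show ?thesis using W unfolding max_compl_pos_def_def by (simp add: Q_eq Q_def)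
qed

end

theorem proposition2p12:
  fixes J :: "'a::{real_inner, complete_space} \<Rightarrow> 'a"
    and \<omega> :: "'a \<Rightarrow> 'a \<Rightarrow> complex"
    and W :: "'a set"
  assumes "complex_structure J"
    and "separable_space TYPE('a)"
    and "strong_symplectic J \<omega>"
    and "\<exists>L. max_compl_pos_def J \<omega> L \<and> (fin_dim L \<or> fin_dim (symp_orth \<omega> L))"
    and "max_pos_def J \<omega> W"
  shows "max_compl_pos_def J \<omega> W"
proof -
  interpret symp J \<omega> using assms(1,3) by unfold_locales
  show ?thesis using main assms(4,5) by blast
qed


end
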